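(* Assume that $\pi$ is a permutation of length $j$ and $\delta=\delta_1\cdots\delta_{k+1}$ is a permutation of length $k+1$, disjoint from each other, where $\mathrm{des}(\pi) = j'$ and $\mathrm{des}(\delta) = k'$. Moreover, $\delta_1<\delta_2$ and all of the elements of $\delta$ are larger than the elements of $\pi$. Then \begin{align*} \sum_{\alpha \in \mathrm{Sh}_l(\pi,\delta)} t^{\mathrm{des}(\alpha)}&=\sum_{i\geq 1} \binom{k+1-k'+j'}{i+j'-k'} \binom{j-j'+k'-1}{i-1} t^{i+j'},\\ \sum_{\alpha \in \mathrm{Sh}_{ls}(\pi,\delta)} t^{\mathrm{des}(\alpha)}&=\sum_{i\geq 1} \binom{k-k'+j'}{i+j'-k'} \binom{j-j'+k'-1}{i-1} t^{i+j'},\\ \sum_{\alpha \in \mathrm{Sh}_{ll}(\pi,\delta)} t^{\mathrm{des}(\alpha)}&=\sum_{i\geq 1} \binom{k-k'+j'}{i+j'-k'} \binom{j-j'+k'-1}{i-1} t^{i+j'}. \end{align*}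
   Context: A permutation of length $n$ here means a sequence of $n$ distinct integers (not necessarily $1,\dots,n$); two permutations are disjoint if they have no letters in common. For $\alpha=\alpha_1\cdots\alpha_n$, $\mathrm{des}(\alpha)$ is the number of indices $i$ with $\alpha_i>\alpha_{i+1}$. For disjoint permutations $\pi=\pi_1\cdots\pi_m$ and $\delta=\delta_1\cdots\delta_n$, a shuffle of $\pi$ and $\delta$ is a permutation $\alpha=\alpha_1\cdots\alpha_{m+n}$ containing both $\pi$ and $\delta$ as subsequences. $\mathrm{Sh}_l(\pi,\delta)$ is the set of shuffles with $\alpha_1=\delta_1$; $\mathrm{Sh}_{ls}(\pi,\delta)$ is the set of shuffles with $\alpha_1=\delta_1$ and $\alpha_{n+m}=\delta_n$ (the last letter of $\delta$); $\mathrm{Sh}_{ll}(\pi,\delta)$ is the set of shuffles with $\alpha_1=\delta_1$ and $\alpha_2=\delta_2$. *)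

theory Defs
  imports Main "HOL-Library.Sublist"
begin

text \<open>A permutation is a list of distinct integers.\<close>
definition des :: "int list \<Rightarrow> nat" where
  "des \<alpha> = card {i. Suc i < length \<alpha> \<and> \<alpha> ! i > \<alpha> ! Suc i}"

definition Sh :: "int list \<Rightarrow> int list \<Rightarrow> int list set" where
  "Sh \<pi> \<delta> = {\<alpha>. distinct \<alpha> \<and> length \<alpha> = length \<pi> + length \<delta> \<and> subseq \<pi> \<alpha> \<and> subseq \<delta> \<alpha>}"

definition Sh_l :: "int list \<Rightarrow> int list \<Rightarrow> int list set" where
  "Sh_l \<pi> \<delta> = {\<alpha> \<in> Sh \<pi> \<delta>. \<alpha> ! 0 = \<delta> ! 0}"

definition Sh_ls :: "int list \<Rightarrow> int list \<Rightarrow> int list set" where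
  "Sh_ls \<pi> \<delta> = {\<alpha> \<in> Sh \<pi> \<delta>. \<alpha> ! 0 = \<delta> ! 0 \<and> last \<alpha> = last \<delta>}"

definition Sh_ll :: "int list \<Rightarrow> int list \<Rightarrow> int list set" where
  "Sh_ll \<pi> \<delta> = {\<alpha> \<in> Sh \<pi> \<delta>. \<alpha> ! 0 = \<delta> ! 0 \<and> \<alpha> ! 1 = \<delta> ! 1}"

end

theory Submission
  imports Defs
begin


lemma shuffles_subseq: "zs \<in> shuffles xs ys \<Longrightarrow> subseq xs zs \<and> subseq ys zs"
  by (induction xs ys arbitrary: zs rule: shuffles.induct) auto

lemma subseq_in_shuffles:
  "distinct zs \<Longrightarrow> length zs = length xs + length ys \<Longrightarrow> subseq xs zs \<Longrightarrow> subseq ys zs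
   \<Longrightarrow> set xs \<inter> set ys = {} \<Longrightarrow> distinct xs \<Longrightarrow> distinct ys \<Longrightarrow> zs \<in> shuffles xs ys"
proof (induction zs arbitrary: xs ys)
  case Nil
  then show ?case by auto
next
  case (Cons a as)
  show ?case
  proof (cases xs)
    case Nil
    then show ?thesis using Cons.prems subseq_same_length[of ys "a#as"] by auto
  next
    case xC: (Cons x xs')
    show ?thesis
    proof (cases ys)
      case Nil
      then show ?thesis using Cons.prems subseq_same_length[of xs "a#as"] by auto
    next
      case yC: (Cons y ys')
      have xy: "x \<noteq> y" using Cons.prems(5) xC yC by auto
      show ?thesis
      proof (cases "a = x")
        case True
        have "as \<in> shuffles xs' ys"
          apply (rule Cons.IH)
          using Cons.prems xC yC True xy by (auto split: if_splits)
        then show ?thesis using xC True by (simp add: Cons_in_shuffles_leftI)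
      next
        case ax: False
        show ?thesis
        proof (cases "a = y")
          case True
          have "as \<in> shuffles xs ys'"
            apply (rule Cons.IH)
            using Cons.prems xC yC True xy by (auto split: if_splits)
          then show ?thesis using yC True by (simp add: Cons_in_shuffles_rightI)
        next
          case False
          have s1: "subseq xs as" "subseq ys as" using Cons.prems xC yC ax False by auto
          have "set xs \<union> set ys \<subseteq> set as"
            using s1 list_emb_set[of "(=)"] by (metis Un_subset_iff subsetI)
          then have "card (set xs \<union> set ys) \<le> card (set as)" by (simp add: card_mono)
          also have "\<dots> \<le> length as" by (rule card_length)
          finally have "card (set xs \<union> set ys) \<le> length as" .
          moreover have "card (set xs \<union> set ys) = length xs + length ys"
            using Cons.prems by (simp add: card_Un_disjoint distinct_card)
          ultimately show ?thesis using Cons.prems(2) by simp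
        qed
      qed
    qed
  qed
qed

lemma Sh_eq:
  assumes "distinct \<pi>" "distinct \<delta>" "set \<pi> \<inter> set \<delta> = {}"
  shows "Sh \<pi> \<delta> = shuffles \<pi> \<delta>"
  unfolding Sh_def using assms subseq_in_shuffles shuffles_subseq
    distinct_disjoint_shuffles length_shuffles by blast



lemma des_single[simp]: "des [x] = 0"
  unfolding des_def by simp

lemma des_Cons2: "des (x # y # ys) = des (y # ys) + (if x > y then 1 else 0)"
proof -
  let ?S = "{i. Suc i < length (y#ys) \<and> (y#ys) ! i > (y#ys) ! Suc i}"
  have "{i. Suc i < length (x#y#ys) \<and> (x#y#ys) ! i > (x#y#ys) ! Suc i}
        = (if x > y then {0} else {}) \<union> Suc ` ?S"
    apply (rule set_eqI)
    subgoal for i by (cases i) auto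
    done
  moreover have "finite ?S" by (rule finite_subset[of _ "{..<length (y#ys)}"]) auto
  moreover have "0 \<notin> Suc ` ?S" by auto
  ultimately show ?thesis unfolding des_def
    by (simp add: card_image)
qed

lemma des_le: "xs \<noteq> [] \<Longrightarrow> des xs \<le> length xs - 1"
proof -
  assume "xs \<noteq> []"
  have "{i. Suc i < length xs \<and> xs ! i > xs ! Suc i} \<subseteq> {..<length xs - 1}" by auto
  then show ?thesis unfolding des_def by (metis card_lessThan card_mono finite_lessThan)
qed

definition cb :: "nat \<Rightarrow> int \<Rightarrow> nat" where
  "cb n x = (if x < 0 then 0 else n choose nat x)"

lemma cb_Suc: "cb (Suc n) x = cb n x + cb n (x - 1)"
proof (cases "x < 0")
  case True then show ?thesis by (simp add: cb_def)
next
  case False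
  show ?thesis
  proof (cases "x = 0")
    case True then show ?thesis by (simp add: cb_def)
  next
    case False
    then obtain m where "x = int (Suc m)" using \<open>\<not> x < 0\<close>
      by (metis int_ops(1) not0_implies_Suc not_less zero_le_imp_eq_int)
    then have "nat x = Suc m" "nat (x - 1) = m" by auto
    moreover have "\<not> x - 1 < 0" "\<not> x < 0" using \<open>x = int (Suc m)\<close> by auto
    ultimately show ?thesis unfolding cb_def by simp
  qed
qed

lemma cb_big: "x > int n \<Longrightarrow> cb n x = 0"
  by (simp add: cb_def)



definition lc :: "nat \<Rightarrow> nat \<Rightarrow> nat \<Rightarrow> nat \<Rightarrow> nat \<Rightarrow> int \<Rightarrow> nat" where
  "lc e a d A D m = cb (A+e+d) (m - int D) * cb (a+D) (m - int d - 1)"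
definition rc :: "nat \<Rightarrow> nat \<Rightarrow> nat \<Rightarrow> nat \<Rightarrow> nat \<Rightarrow> int \<Rightarrow> nat" where
  "rc e a d A D m = cb (A+e+d) (m - int D) * cb (a+D) (m - int d)"

definition ev :: "'a::comm_ring_1 \<Rightarrow> (int \<Rightarrow> nat) \<Rightarrow> nat \<Rightarrow> 'a" where
  "ev t c N = (\<Sum>m<N. of_nat (c (int m)) * t ^ m)"

definition FL :: "'a::comm_ring_1 \<Rightarrow> nat \<Rightarrow> nat \<Rightarrow> nat \<Rightarrow> nat \<Rightarrow> nat \<Rightarrow> 'a" where
  "FL t e a d A D = ev t (lc e a d A D) (a+d+D+2)"
definition FR :: "'a::comm_ring_1 \<Rightarrow> nat \<Rightarrow> nat \<Rightarrow> nat \<Rightarrow> nat \<Rightarrow> nat \<Rightarrow> 'a" where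
  "FR t e a d A D = ev t (rc e a d A D) (a+d+D+2)"

lemma ev_ext:
  assumes "\<And>m. m \<ge> B \<Longrightarrow> c (int m) = 0" "B \<le> N"
  shows "ev t c N = ev t c B"
  unfolding ev_def
  apply (rule sum.mono_neutral_right)
  using assms by auto

lemma lc_van: "m \<ge> a+d+D+2 \<Longrightarrow> lc e a d A D (int m) = 0"
  unfolding lc_def by (simp add: cb_big)
lemma rc_van: "m \<ge> a+d+D+2 \<Longrightarrow> rc e a d A D (int m) = 0"
  unfolding rc_def by (simp add: cb_big)

lemma FL_N: "N \<ge> a+d+D+2 \<Longrightarrow> FL t e a d A D = ev t (lc e a d A D) N"
  unfolding FL_def by (rule ev_ext[symmetric]) (auto intro: lc_van)
lemma FR_N: "N \<ge> a+d+D+2 \<Longrightarrow> FR t e a d A D = ev t (rc e a d A D) N"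
  unfolding FR_def by (rule ev_ext[symmetric]) (auto intro: rc_van)

lemma ev_shift:
  assumes "c (-1) = 0"
  shows "t * ev t c N = ev t (\<lambda>x. c (x - 1)) (Suc N)"
  unfolding ev_def sum.lessThan_Suc_shift
  using assms by (simp add: sum_distrib_left algebra_simps)

lemma ev_add: "ev t c N + ev t c' N = ev t (\<lambda>x. c x + c' x) N"
  unfolding ev_def by (simp add: sum.distrib distrib_right)

lemma ev_cong: "(\<And>x. c x = c' x) \<Longrightarrow> ev t c N = ev t c' N"
  by (simp add: ev_def)

lemma lc_m1: "lc e a d A D (-1) = 0" by (simp add: lc_def cb_def)
lemma rc_m1: "rc e a d A D (-1) = 0" by (simp add: rc_def cb_def)

lemma I1: "FL t e a d (Suc A) D = FL t e a d A D + t * FR t e a d A D"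
proof -
  define N where "N = a+d+D+2"
  have "FL t e a d (Suc A) D = ev t (lc e a d (Suc A) D) (Suc N)" by (rule FL_N) (simp add: N_def)
  moreover have "FL t e a d A D = ev t (lc e a d A D) (Suc N)" by (rule FL_N) (simp add: N_def)
  moreover have "t * FR t e a d A D = ev t (\<lambda>x. rc e a d A D (x - 1)) (Suc N)"
    unfolding FR_def N_def by (rule ev_shift) (simp add: rc_m1)
  moreover have "\<And>x. lc e a d (Suc A) D x = lc e a d A D x + rc e a d A D (x - 1)"
    unfolding lc_def rc_def by (simp add: cb_Suc algebra_simps)
  ultimately show ?thesis by (simp add: ev_add cong: ev_cong)
qed

lemma I2: "FL t e a d A (Suc D) = t * FL t e a d A D + t * FR t e a d A D"
proof -
  define N where "N = a+d+D+2"
  have "FL t e a d A (Suc D) = ev t (lc e a d A (Suc D)) (Suc N)" by (rule FL_N) (simp add: N_def)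
  moreover have "t * FL t e a d A D = ev t (\<lambda>x. lc e a d A D (x - 1)) (Suc N)"
    unfolding FL_def N_def by (rule ev_shift) (simp add: lc_m1)
  moreover have "t * FR t e a d A D = ev t (\<lambda>x. rc e a d A D (x - 1)) (Suc N)"
    unfolding FR_def N_def by (rule ev_shift) (simp add: rc_m1)
  moreover have "\<And>x. lc e a d A (Suc D) x = lc e a d A D (x - 1) + rc e a d A D (x - 1)"
    unfolding lc_def rc_def by (simp add: cb_Suc algebra_simps)
  ultimately show ?thesis by (simp add: ev_add cong: ev_cong)
qed

lemma I3: "FR t e (Suc a) d A D = FR t e a d A D + FL t e a d A D"
proof -
  define N where "N = a+d+D+3"
  have "FR t e (Suc a) d A D = ev t (rc e (Suc a) d A D) N" by (rule FR_N) (simp add: N_def)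
  moreover have "FL t e a d A D = ev t (lc e a d A D) N" by (rule FL_N) (simp add: N_def)
  moreover have "FR t e a d A D = ev t (rc e a d A D) N" by (rule FR_N) (simp add: N_def)
  moreover have "\<And>x. rc e (Suc a) d A D x = rc e a d A D x + lc e a d A D x"
    unfolding lc_def rc_def by (simp add: cb_Suc algebra_simps)
  ultimately show ?thesis by (simp add: ev_add cong: ev_cong)
qed

lemma I4: "FR t e a (Suc d) A D = t * FR t e a d A D + FL t e a d A D"
proof -
  define N where "N = a+d+D+2"
  have "FR t e a (Suc d) A D = ev t (rc e a (Suc d) A D) (Suc N)" by (rule FR_N) (simp add: N_def)
  moreover have "FL t e a d A D = ev t (lc e a d A D) (Suc N)" by (rule FL_N) (simp add: N_def)
  moreover have "t * FR t e a d A D = ev t (\<lambda>x. rc e a d A D (x - 1)) (Suc N)"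
    unfolding FR_def N_def by (rule ev_shift) (simp add: rc_m1)
  moreover have "\<And>x. rc e a (Suc d) A D x = rc e a d A D (x - 1) + lc e a d A D x"
    unfolding lc_def rc_def by (simp add: cb_Suc algebra_simps)
  ultimately show ?thesis by (simp add: ev_add cong: ev_cong)
qed

lemma ev_single:
  assumes "\<And>x. c x = (if x = int p then 1 else 0)" "p < N"
  shows "ev t c N = t ^ p"
proof -
  have "ev t c N = (\<Sum>m<N. if m = p then t ^ m else 0)"
    unfolding ev_def by (rule sum.cong) (auto simp: assms(1))
  also have "\<dots> = t ^ p" using assms(2) by (simp add: sum.delta)
  finally show ?thesis .
qed

lemma FL_base1: "FL t 1 a d 0 0 = t ^ Suc d"
  unfolding FL_def
proof (rule ev_single)
  fix x :: int
  show "lc 1 a d 0 0 x = (if x = int (Suc d) then 1 else 0)"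
    using nat_int_add[of 1 d] unfolding lc_def cb_def by (auto simp: binomial_eq_0 nat_diff_distrib)
qed simp

lemma FL_base0: "FL t 0 a d 0 0 = 0"
proof -
  have "\<And>x. lc 0 a d 0 0 x = 0" unfolding lc_def cb_def by (auto simp: binomial_eq_0)
  then show ?thesis unfolding FL_def ev_def by simp
qed

lemma FR_base: "FR t e 0 0 A D = t ^ D"
  unfolding FR_def
proof (rule ev_single)
  fix x :: int
  show "rc e 0 0 A D x = (if x = int D then 1 else 0)"
    unfolding rc_def cb_def by (auto simp: binomial_eq_0)
qed simp



definition good :: "int list \<Rightarrow> int list \<Rightarrow> bool" where
  "good \<pi> \<delta> \<longleftrightarrow> distinct \<pi> \<and> distinct \<delta> \<and> (\<forall>x\<in>set \<pi>. \<forall>y\<in>set \<delta>. x < y)"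

definition SS :: "'a::comm_ring_1 \<Rightarrow> (int list \<Rightarrow> bool) \<Rightarrow> int list \<Rightarrow> int list \<Rightarrow> 'a" where
  "SS t P \<pi> \<delta> = (\<Sum>\<alpha>\<in>{\<alpha>\<in>shuffles \<pi> \<delta>. P \<alpha>}. t ^ des \<alpha>)"

definition LS :: "'a::comm_ring_1 \<Rightarrow> nat \<Rightarrow> int list \<Rightarrow> int list \<Rightarrow> 'a" where
  "LS t e \<pi> \<delta> = SS t (\<lambda>\<alpha>. hd \<alpha> = hd \<delta> \<and> (e = 0 \<longrightarrow> last \<alpha> = last \<delta>)) \<pi> \<delta>"
definition RS :: "'a::comm_ring_1 \<Rightarrow> nat \<Rightarrow> int list \<Rightarrow> int list \<Rightarrow> 'a" where
  "RS t e \<pi> \<delta> = SS t (\<lambda>\<alpha>. hd \<alpha> = hd \<pi> \<and> (e = 0 \<longrightarrow> last \<alpha> = last \<delta>)) \<pi> \<delta>"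

lemma shuffles_hd_right:
  assumes "d \<notin> set xs"
  shows "{\<alpha>\<in>shuffles xs (d#ds). hd \<alpha> = d \<and> Q \<alpha>} = (#) d ` {\<beta>\<in>shuffles xs ds. Q (d#\<beta>)}"
proof (rule set_eqI, rule iffI)
  fix \<alpha> assume h: "\<alpha> \<in> {\<alpha>\<in>shuffles xs (d#ds). hd \<alpha> = d \<and> Q \<alpha>}"
  then obtain zs where z: "\<alpha> = d # zs"
    by (cases \<alpha>) auto
  then have "zs \<in> shuffles xs ds" using h assms Cons_in_shuffles_iff[of d zs xs "d#ds"]
    by (metis (mono_tags, lifting) list.exhaust_sel list.sel(3) list.set_sel(1) mem_Collect_eq)
  then show "\<alpha> \<in> (#) d ` {\<beta>\<in>shuffles xs ds. Q (d#\<beta>)}" using h z by auto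
next
  fix \<alpha> assume "\<alpha> \<in> (#) d ` {\<beta>\<in>shuffles xs ds. Q (d#\<beta>)}"
  then show "\<alpha> \<in> {\<alpha>\<in>shuffles xs (d#ds). hd \<alpha> = d \<and> Q \<alpha>}"
    by (auto intro: Cons_in_shuffles_rightI)
qed

lemma shuffles_hd_left:
  assumes "p \<notin> set ys"
  shows "{\<alpha>\<in>shuffles (p#ps) ys. hd \<alpha> = p \<and> Q \<alpha>} = (#) p ` {\<beta>\<in>shuffles ps ys. Q (p#\<beta>)}"
  using shuffles_hd_right[OF assms, of ps Q] by (simp add: shuffles_commutes)

lemma shuffles_split2:
  "{\<beta>\<in>shuffles (p#ps) (x#xs). Q \<beta>} =
    {\<beta>\<in>shuffles (p#ps) (x#xs). hd \<beta> = x \<and> Q \<beta>} \<union> {\<beta>\<in>shuffles (p#ps) (x#xs). hd \<beta> = p \<and> Q \<beta>}"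
  by auto

lemma des_Cons_hd: "\<beta> \<noteq> [] \<Longrightarrow> des (z # \<beta>) = des \<beta> + (if z > hd \<beta> then 1 else 0)"
  by (cases \<beta>) (auto simp: des_Cons2)

lemma sum_split_hd:
  fixes t :: "'a::comm_ring_1"
  assumes "x \<noteq> p"
  shows "(\<Sum>\<beta>\<in>{\<beta>\<in>shuffles (p#ps) (x#xs). Q \<beta>}. t ^ des (z # \<beta>)) =
     (if z > x then t else 1) * (\<Sum>\<beta>\<in>{\<beta>\<in>shuffles (p#ps) (x#xs). hd \<beta> = x \<and> Q \<beta>}. t ^ des \<beta>)
   + (if z > p then t else 1) * (\<Sum>\<beta>\<in>{\<beta>\<in>shuffles (p#ps) (x#xs). hd \<beta> = p \<and> Q \<beta>}. t ^ des \<beta>)"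
proof -
  have ne: "\<And>\<beta>. \<beta> \<in> shuffles (p#ps) (x#xs) \<Longrightarrow> \<beta> \<noteq> []" by auto
  have "(\<Sum>\<beta>\<in>{\<beta>\<in>shuffles (p#ps) (x#xs). Q \<beta>}. t ^ des (z # \<beta>)) =
    (\<Sum>\<beta>\<in>{\<beta>\<in>shuffles (p#ps) (x#xs). hd \<beta> = x \<and> Q \<beta>}. t ^ des (z # \<beta>)) +
    (\<Sum>\<beta>\<in>{\<beta>\<in>shuffles (p#ps) (x#xs). hd \<beta> = p \<and> Q \<beta>}. t ^ des (z # \<beta>))"
    apply (subst shuffles_split2)
    apply (rule sum.union_disjoint)
    using assms by auto
  also have "(\<Sum>\<beta>\<in>{\<beta>\<in>shuffles (p#ps) (x#xs). hd \<beta> = x \<and> Q \<beta>}. t ^ des (z # \<beta>)) =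
     (if z > x then t else 1) * (\<Sum>\<beta>\<in>{\<beta>\<in>shuffles (p#ps) (x#xs). hd \<beta> = x \<and> Q \<beta>}. t ^ des \<beta>)"
    unfolding sum_distrib_left
    by (rule sum.cong) (auto simp: des_Cons_hd ne)
  also have "(\<Sum>\<beta>\<in>{\<beta>\<in>shuffles (p#ps) (x#xs). hd \<beta> = p \<and> Q \<beta>}. t ^ des (z # \<beta>)) =
     (if z > p then t else 1) * (\<Sum>\<beta>\<in>{\<beta>\<in>shuffles (p#ps) (x#xs). hd \<beta> = p \<and> Q \<beta>}. t ^ des \<beta>)"
    unfolding sum_distrib_left
    by (rule sum.cong) (auto simp: des_Cons_hd ne)
  finally show ?thesis .
qed

lemma last_ne_shuffle: "\<beta> \<in> shuffles xs ys \<Longrightarrow> ys \<noteq> [] \<Longrightarrow> \<beta> \<noteq> []"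
  by auto

lemma L_rec:
  fixes t :: "'a::comm_ring_1"
  assumes g: "good (p#ps) (d#x#xs)"
  shows "LS t e (p#ps) (d#x#xs) = (if d > x then t else 1) * LS t e (p#ps) (x#xs) + t * RS t e (p#ps) (x#xs)"
proof -
  have dn: "d \<notin> set (p#ps)" using g unfolding good_def by fastforce
  have xp: "x \<noteq> p" using g unfolding good_def by fastforce
  have dp: "d > p" using g unfolding good_def by auto
  have "LS t e (p#ps) (d#x#xs) = (\<Sum>\<alpha>\<in>(#) d ` {\<beta>\<in>shuffles (p#ps) (x#xs). e = 0 \<longrightarrow> last (d#\<beta>) = last (d#x#xs)}. t ^ des \<alpha>)"
    unfolding LS_def SS_def using shuffles_hd_right[OF dn, of "x#xs" "\<lambda>\<alpha>. e = 0 \<longrightarrow> last \<alpha> = last (d#x#xs)"]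
    by simp
  also have "\<dots> = (\<Sum>\<beta>\<in>{\<beta>\<in>shuffles (p#ps) (x#xs). e = 0 \<longrightarrow> last \<beta> = last (x#xs)}. t ^ des (d # \<beta>))"
    by (subst sum.reindex) (auto simp: inj_on_def intro!: sum.cong)
  also have "\<dots> = (if d > x then t else 1) * LS t e (p#ps) (x#xs) + t * RS t e (p#ps) (x#xs)"
    unfolding LS_def SS_def RS_def
    using sum_split_hd[OF xp, where ps=ps and xs=xs and Q="\<lambda>\<beta>. e = 0 \<longrightarrow> last \<beta> = last (x#xs)" and t=t and z=d] dp
    by (simp del: shuffles.simps)
  finally show ?thesis .
qed

lemma R_rec:
  fixes t :: "'a::comm_ring_1"
  assumes g: "good (p#q#qs) (d#ds)"
  shows "RS t e (p#q#qs) (d#ds) = (if p > q then t else 1) * RS t e (q#qs) (d#ds) + LS t e (q#qs) (d#ds)"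
proof -
  have pn: "p \<notin> set (d#ds)" using g unfolding good_def by fastforce
  have xp: "d \<noteq> q" using g unfolding good_def by fastforce
  have dp: "\<not> p > d" using g unfolding good_def by auto
  have "RS t e (p#q#qs) (d#ds) = (\<Sum>\<alpha>\<in>(#) p ` {\<beta>\<in>shuffles (q#qs) (d#ds). e = 0 \<longrightarrow> last (p#\<beta>) = last (d#ds)}. t ^ des \<alpha>)"
    unfolding RS_def SS_def using shuffles_hd_left[OF pn, of "q#qs" "\<lambda>\<alpha>. e = 0 \<longrightarrow> last \<alpha> = last (d#ds)"]
    by simp
  also have "\<dots> = (\<Sum>\<beta>\<in>{\<beta>\<in>shuffles (q#qs) (d#ds). e = 0 \<longrightarrow> last \<beta> = last (d#ds)}. t ^ des (p # \<beta>))"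
    by (subst sum.reindex) (auto simp: inj_on_def intro!: sum.cong)
  also have "\<dots> = (if p > q then t else 1) * RS t e (q#qs) (d#ds) + LS t e (q#qs) (d#ds)"
    unfolding LS_def SS_def RS_def
    using sum_split_hd[OF xp, where ps=qs and xs=ds and Q="\<lambda>\<beta>. e = 0 \<longrightarrow> last \<beta> = last (d#ds)" and t=t and z=p] dp
    by (simp del: shuffles.simps add: add.commute)
  finally show ?thesis .
qed

lemma L_base:
  fixes t :: "'a::comm_ring_1"
  assumes g: "good (p#ps) [d]"
  shows "LS t e (p#ps) [d] = (if e = 0 then 0 else t ^ Suc (des (p#ps)))"
proof -
  have dn: "d \<notin> set (p#ps)" using g unfolding good_def by fastforce
  have "LS t e (p#ps) [d] = (\<Sum>\<alpha>\<in>(#) d ` {\<beta>\<in>shuffles (p#ps) []. e = 0 \<longrightarrow> last (d#\<beta>) = d}. t ^ des \<alpha>)"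
    unfolding LS_def SS_def using shuffles_hd_right[OF dn, of "[]" "\<lambda>\<alpha>. e = 0 \<longrightarrow> last \<alpha> = d"]
    by simp
  also have "{\<beta>\<in>shuffles (p#ps) []. e = 0 \<longrightarrow> last (d#\<beta>) = d} = (if e = 0 then {} else {p#ps})"
    using dn last_in_set[of "p#ps"] by auto
  moreover have "p < d" using g unfolding good_def by auto
  ultimately show ?thesis using dn by (auto simp: des_Cons_hd)
qed

lemma R_base:
  fixes t :: "'a::comm_ring_1"
  assumes g: "good [p] (d#ds)"
  shows "RS t e [p] (d#ds) = t ^ des (d#ds)"
proof -
  have pn: "p \<notin> set (d#ds)" using g unfolding good_def by fastforce
  have dp: "\<not> p > d" using g unfolding good_def by auto
  have "RS t e [p] (d#ds) = (\<Sum>\<alpha>\<in>(#) p ` {\<beta>\<in>shuffles [] (d#ds). e = 0 \<longrightarrow> last (p#\<beta>) = last (d#ds)}. t ^ des \<alpha>)"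
    unfolding RS_def SS_def using shuffles_hd_left[OF pn, of "[]" "\<lambda>\<alpha>. e = 0 \<longrightarrow> last \<alpha> = last (d#ds)"]
    by simp
  also have "{\<beta>\<in>shuffles [] (d#ds). e = 0 \<longrightarrow> last (p#\<beta>) = last (d#ds)} = {d#ds}"
    by auto
  finally show ?thesis using dp by (simp add: des_Cons_hd)
qed



definition asc :: "int list \<Rightarrow> nat" where "asc xs = length xs - 1 - des xs"

lemma good_tl1: "good (p#ps) \<delta> \<Longrightarrow> good ps \<delta>" by (auto simp: good_def)
lemma good_tl2: "good \<pi> (d#ds) \<Longrightarrow> good \<pi> ds" by (auto simp: good_def)

lemma main:
  fixes t :: "'a::comm_ring_1"
  shows "good \<pi> \<delta> \<Longrightarrow> \<pi> \<noteq> [] \<Longrightarrow> \<delta> \<noteq> [] \<Longrightarrow> e \<le> 1 \<Longrightarrow>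
    LS t e \<pi> \<delta> = FL t e (asc \<pi>) (des \<pi>) (asc \<delta>) (des \<delta>) \<and>
    RS t e \<pi> \<delta> = FR t e (asc \<pi>) (des \<pi>) (asc \<delta>) (des \<delta>)"
proof (induction "length \<pi> + length \<delta>" arbitrary: \<pi> \<delta> rule: less_induct)
  case less
  obtain p ps where pe: "\<pi> = p # ps" using less.prems by (cases \<pi>) auto
  obtain d ds where de: "\<delta> = d # ds" using less.prems by (cases \<delta>) auto
  have dle_pi: "des \<pi> \<le> length \<pi> - 1" using des_le less.prems by blast
  have dle_de: "des \<delta> \<le> length \<delta> - 1" using des_le less.prems by blast
  have L: "LS t e \<pi> \<delta> = FL t e (asc \<pi>) (des \<pi>) (asc \<delta>) (des \<delta>)"
  proof (cases ds)
    case Nil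
    have "LS t e \<pi> \<delta> = (if e = 0 then 0 else t ^ Suc (des \<pi>))"
      using L_base[of p ps d t e] less.prems pe de Nil by simp
    moreover have a0: "asc \<delta> = 0" "des \<delta> = 0" using de Nil by (auto simp: asc_def)
    moreover have "FL t e (asc \<pi>) (des \<pi>) (asc \<delta>) (des \<delta>) = FL t e (asc \<pi>) (des \<pi>) 0 0"
      using a0 by simp
    ultimately show ?thesis using less.prems(4) FL_base0[of t] FL_base1[of t]
      by (cases e) auto
  next
    case (Cons x xs)
    have IH: "LS t e \<pi> ds = FL t e (asc \<pi>) (des \<pi>) (asc ds) (des ds)"
             "RS t e \<pi> ds = FR t e (asc \<pi>) (des \<pi>) (asc ds) (des ds)"
      using less.hyps[of \<pi> ds] less.prems de Cons good_tl2 by auto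
    have rec: "LS t e \<pi> \<delta> = (if d > x then t else 1) * LS t e \<pi> ds + t * RS t e \<pi> ds"
      using L_rec[of p ps d x xs t e] less.prems pe de Cons by simp
    have dx: "d \<noteq> x" using less.prems(1) de Cons by (auto simp: good_def)
    have dd: "des \<delta> = des ds + (if d > x then 1 else 0)" using de Cons by (simp add: des_Cons2)
    have dl: "des ds \<le> length ds - 1" using des_le Cons by blast
    show ?thesis
    proof (cases "d > x")
      case True
      then have "asc \<delta> = asc ds" "des \<delta> = Suc (des ds)" using dd de Cons dl by (auto simp: asc_def)
      then show ?thesis using rec IH True by (simp add: I2)
    next
      case False
      then have "asc \<delta> = Suc (asc ds)" "des \<delta> = des ds" using dd de Cons dl by (auto simp: asc_def)
      then show ?thesis using rec IH False by (simp add: I1)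
    qed
  qed
  have R: "RS t e \<pi> \<delta> = FR t e (asc \<pi>) (des \<pi>) (asc \<delta>) (des \<delta>)"
  proof (cases ps)
    case Nil
    have "RS t e \<pi> \<delta> = t ^ des \<delta>"
      using R_base[of p d ds t e] less.prems pe de Nil by simp
    moreover have "asc \<pi> = 0" "des \<pi> = 0" using pe Nil by (auto simp: asc_def)
    ultimately show ?thesis by (simp add: FR_base)
  next
    case (Cons q qs)
    have IH: "LS t e ps \<delta> = FL t e (asc ps) (des ps) (asc \<delta>) (des \<delta>)"
             "RS t e ps \<delta> = FR t e (asc ps) (des ps) (asc \<delta>) (des \<delta>)"
      using less.hyps[of ps \<delta>] less.prems pe Cons good_tl1 by auto
    have rec: "RS t e \<pi> \<delta> = (if p > q then t else 1) * RS t e ps \<delta> + LS t e ps \<delta>"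
      using R_rec[of p q qs d ds t e] less.prems pe de Cons by simp
    have dd: "des \<pi> = des ps + (if p > q then 1 else 0)" using pe Cons by (simp add: des_Cons2)
    have dl: "des ps \<le> length ps - 1" using des_le Cons by blast
    show ?thesis
    proof (cases "p > q")
      case True
      then have "asc \<pi> = asc ps" "des \<pi> = Suc (des ps)" using dd pe Cons dl by (auto simp: asc_def)
      then show ?thesis using rec IH True by (simp add: I4)
    next
      case False
      have "p \<noteq> q" using less.prems(1) pe Cons by (auto simp: good_def)
      with False have "asc \<pi> = Suc (asc ps)" "des \<pi> = des ps" using dd pe Cons dl by (auto simp: asc_def)
      then show ?thesis using rec IH False by (simp add: I3)
    qed
  qed
  show ?case using L R by simp
qed



lemma conv:
  fixes t :: "'a::comm_ring_1"
  assumes "j' < j" "k' \<le> k"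
  shows "FL t e (j - 1 - j') j' A k' =
     (\<Sum>i=1..j+k+1. if k' \<le> i + j' then
        of_nat ((A + e + j') choose (i + j' - k')) * of_nat ((j - j' + k' - 1) choose (i - 1)) * t ^ (i + j')
      else 0)"
proof -
  define g where "g i = (if k' \<le> i + j' then
        of_nat ((A + e + j') choose (i + j' - k')) * of_nat ((j - j' + k' - 1) choose (i - 1)) * t ^ (i + j')
      else (0::'a))" for i
  define f where "f m = of_nat (lc e (j - 1 - j') j' A k' (int m)) * t ^ m" for m
  have "FL t e (j - 1 - j') j' A k' = ev t (lc e (j - 1 - j') j' A k') (j'+j+k+2)"
    by (rule FL_N) (use assms in simp)
  also have "\<dots> = sum f {..<j'+j+k+2}" unfolding ev_def f_def by simp
  also have "\<dots> = sum f {1+j'..j+k+1+j'}"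
    by (rule sum.mono_neutral_right) (auto simp: f_def lc_def cb_def)
  also have "\<dots> = sum (\<lambda>i. f (i + j')) {1..j+k+1}" by (rule sum.shift_bounds_cl_nat_ivl)
  also have "\<dots> = sum g {1..j+k+1}"
  proof (rule sum.cong)
    fix i assume i: "i \<in> {1..j+k+1}"
    have c2: "cb (j - 1 - j' + k') (int (i + j') - int j' - 1) = (j - j' + k' - 1) choose (i - 1)"
      using i assms unfolding cb_def by (auto simp: nat_diff_distrib)
    have c1: "cb (A + e + j') (int (i + j') - int k') = (if k' \<le> i + j' then (A + e + j') choose (i + j' - k') else 0)"
    proof (cases "k' \<le> i + j'")
      case True
      then have "int (i + j') - int k' = int (i + j' - k')" by (simp add: of_nat_diff)
      then show ?thesis using True unfolding cb_def by (simp only: nat_int) simp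
    qed (simp add: cb_def)
    show "f (i + j') = g i" unfolding f_def g_def lc_def c1 c2 by simp
  qed simp
  finally show ?thesis unfolding g_def .
qed



theorem theorem3p4:
  fixes \<pi> \<delta> :: "int list" and j k j' k' :: nat and t :: "'a::comm_ring_1"
  assumes "distinct \<pi>" and "distinct \<delta>" and "set \<pi> \<inter> set \<delta> = {}"
    and "length \<pi> = j" and "length \<delta> = k + 1"
    and "j \<ge> 1" and "k \<ge> 1"
    and "des \<pi> = j'" and "des \<delta> = k'"
    and "\<delta> ! 0 < \<delta> ! 1"
    and "\<forall>x\<in>set \<pi>. \<forall>y\<in>set \<delta>. x < y"
  shows "((\<Sum>\<alpha>\<in>Sh_l \<pi> \<delta>. t ^ des \<alpha>) =
           (\<Sum>i=1..j+k+1. if k' \<le> i + j' then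
              of_nat ((k + 1 - k' + j') choose (i + j' - k')) * of_nat ((j - j' + k' - 1) choose (i - 1)) * t ^ (i + j')
            else 0)) \<and>
         ((\<Sum>\<alpha>\<in>Sh_ls \<pi> \<delta>. t ^ des \<alpha>) =
           (\<Sum>i=1..j+k+1. if k' \<le> i + j' then
              of_nat ((k - k' + j') choose (i + j' - k')) * of_nat ((j - j' + k' - 1) choose (i - 1)) * t ^ (i + j')
            else 0)) \<and>
         ((\<Sum>\<alpha>\<in>Sh_ll \<pi> \<delta>. t ^ des \<alpha>) =
           (\<Sum>i=1..j+k+1. if k' \<le> i + j' then
              of_nat ((k - k' + j') choose (i + j' - k')) * of_nat ((j - j' + k' - 1) choose (i - 1)) * t ^ (i + j')
            else 0))"
proof -
  obtain d1 d2 ds where de: "\<delta> = d1 # d2 # ds"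
    using assms(5,7) by (cases \<delta>; cases "tl \<delta>") auto
  have pne: "\<pi> \<noteq> []" using assms(4,6) by auto
  have g: "good \<pi> \<delta>" using assms unfolding good_def by auto
  have g2: "good \<pi> (d2 # ds)" using g de good_tl2 by blast
  have Sh: "Sh \<pi> \<delta> = shuffles \<pi> \<delta>" using Sh_eq assms(1-3) by blast
  have jj: "j' < j" using des_le[OF pne] assms(4,6,8) by auto
  have kk: "k' \<le> k" using des_le[of \<delta>] assms(5,9) de by auto
  have d12: "d1 < d2" using assms(10) de by simp
  have desd: "des (d2 # ds) = k'" using assms(9) de d12 by (simp add: des_Cons2)
  have kk2: "k' \<le> k - 1" using des_le[of "d2 # ds"] desd assms(5) de by auto
  have ascpi: "asc \<pi> = j - 1 - j'" using assms(4,8) by (simp add: asc_def)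
  have ascd: "asc \<delta> = k - k'" using assms(5,9) by (simp add: asc_def)
  have ascd2: "asc (d2 # ds) = k - 1 - k'" using assms(5) de desd by (simp add: asc_def)
  have ne: "\<And>\<alpha>. \<alpha> \<in> shuffles \<pi> \<delta> \<Longrightarrow> \<alpha> ! 0 = hd \<alpha>"
    using de by (metis Nil_in_shuffles hd_conv_nth list.simps(3))
  have d0: "\<delta> ! 0 = hd \<delta>" using de by simp
  have "Sh_l \<pi> \<delta> = {\<alpha>\<in>shuffles \<pi> \<delta>. hd \<alpha> = hd \<delta> \<and> (1 = (0::nat) \<longrightarrow> last \<alpha> = last \<delta>)}"
    unfolding Sh_l_def Sh using ne d0 by auto
  then have "(\<Sum>\<alpha>\<in>Sh_l \<pi> \<delta>. t ^ des \<alpha>) = LS t 1 \<pi> \<delta>" unfolding LS_def SS_def by simp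
  also have "\<dots> = FL t 1 (j - 1 - j') j' (k - k') k'"
    using main[OF g pne _, of 1 t] de ascpi ascd assms(8,9) by simp
  also have "\<dots> = (\<Sum>i=1..j+k+1. if k' \<le> i + j' then
              of_nat ((k + 1 - k' + j') choose (i + j' - k')) * of_nat ((j - j' + k' - 1) choose (i - 1)) * t ^ (i + j')
            else 0)"
  proof -
    have e1: "k - k' + 1 + j' = k + 1 - k' + j'" using kk by simp
    show ?thesis using conv[OF jj kk, of t 1 "k - k'"] unfolding e1 .
  qed
  finally have P1: "(\<Sum>\<alpha>\<in>Sh_l \<pi> \<delta>. t ^ des \<alpha>) = (\<Sum>i=1..j+k+1. if k' \<le> i + j' then
              of_nat ((k + 1 - k' + j') choose (i + j' - k')) * of_nat ((j - j' + k' - 1) choose (i - 1)) * t ^ (i + j')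
            else 0)" .
  have "Sh_ls \<pi> \<delta> = {\<alpha>\<in>shuffles \<pi> \<delta>. hd \<alpha> = hd \<delta> \<and> (0 = (0::nat) \<longrightarrow> last \<alpha> = last \<delta>)}"
    unfolding Sh_ls_def Sh using ne d0 by auto
  then have "(\<Sum>\<alpha>\<in>Sh_ls \<pi> \<delta>. t ^ des \<alpha>) = LS t 0 \<pi> \<delta>" unfolding LS_def SS_def by simp
  also have "\<dots> = FL t 0 (j - 1 - j') j' (k - k') k'"
    using main[OF g pne _, of 0 t] de ascpi ascd assms(8,9) by simp
  also have "\<dots> = (\<Sum>i=1..j+k+1. if k' \<le> i + j' then
              of_nat ((k - k' + j') choose (i + j' - k')) * of_nat ((j - j' + k' - 1) choose (i - 1)) * t ^ (i + j')
            else 0)"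
  proof -
    have e1: "k - k' + 0 + j' = k - k' + j'" by simp
    show ?thesis using conv[OF jj kk, of t 0 "k - k'"] unfolding e1 .
  qed
  finally have P2: "(\<Sum>\<alpha>\<in>Sh_ls \<pi> \<delta>. t ^ des \<alpha>) = (\<Sum>i=1..j+k+1. if k' \<le> i + j' then
              of_nat ((k - k' + j') choose (i + j' - k')) * of_nat ((j - j' + k' - 1) choose (i - 1)) * t ^ (i + j')
            else 0)" .
  have d1n: "d1 \<notin> set \<pi>" using g de unfolding good_def by fastforce
  have d01: "\<delta> ! 0 = d1" "\<delta> ! 1 = d2" using de by auto
  have "Sh_ll \<pi> \<delta> = {\<alpha>\<in>shuffles \<pi> \<delta>. hd \<alpha> = d1 \<and> \<alpha> ! 1 = d2}"
    unfolding Sh_ll_def Sh by (intro Collect_cong) (metis ne d01)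
  also have "\<dots> = {\<alpha>\<in>shuffles \<pi> (d1 # d2 # ds). hd \<alpha> = d1 \<and> \<alpha> ! 1 = d2}"
    by (simp only: de)
  also have "\<dots> = (#) d1 ` {\<beta>\<in>shuffles \<pi> (d2 # ds). (d1 # \<beta>) ! 1 = d2}"
    by (rule shuffles_hd_right[OF d1n])
  also have "{\<beta>\<in>shuffles \<pi> (d2 # ds). (d1 # \<beta>) ! 1 = d2} =
       {\<beta>\<in>shuffles \<pi> (d2 # ds). hd \<beta> = hd (d2 # ds) \<and> (1 = (0::nat) \<longrightarrow> last \<beta> = last (d2 # ds))}"
  proof (intro Collect_cong)
    fix \<beta>
    have "\<beta> \<in> shuffles \<pi> (d2 # ds) \<Longrightarrow> \<beta> ! 0 = hd \<beta>"
      by (metis Nil_in_shuffles hd_conv_nth list.simps(3))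
    then show "(\<beta> \<in> shuffles \<pi> (d2 # ds) \<and> (d1 # \<beta>) ! 1 = d2) =
      (\<beta> \<in> shuffles \<pi> (d2 # ds) \<and> hd \<beta> = hd (d2 # ds) \<and> (1 = (0::nat) \<longrightarrow> last \<beta> = last (d2 # ds)))"
      by auto
  qed
  finally have "(\<Sum>\<alpha>\<in>Sh_ll \<pi> \<delta>. t ^ des \<alpha>) =
      (\<Sum>\<alpha>\<in>(#) d1 ` {\<beta>\<in>shuffles \<pi> (d2 # ds). hd \<beta> = hd (d2 # ds) \<and> (1 = (0::nat) \<longrightarrow> last \<beta> = last (d2 # ds))}. t ^ des \<alpha>)"
    by simp
  also have "\<dots> = (\<Sum>\<beta>\<in>{\<beta>\<in>shuffles \<pi> (d2 # ds). hd \<beta> = hd (d2 # ds) \<and> (1 = (0::nat) \<longrightarrow> last \<beta> = last (d2 # ds))}. t ^ des (d1 # \<beta>))"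
    by (subst sum.reindex) (auto simp: inj_on_def)
  also have "\<dots> = LS t 1 \<pi> (d2 # ds)"
    unfolding LS_def SS_def
  proof (rule sum.cong)
    fix x assume x: "x \<in> {\<beta>\<in>shuffles \<pi> (d2 # ds). hd \<beta> = hd (d2 # ds) \<and> (1 = (0::nat) \<longrightarrow> last \<beta> = last (d2 # ds))}"
    then have "x \<noteq> []" by (metis (no_types, lifting) Nil_in_shuffles list.simps(3) mem_Collect_eq)
    then show "t ^ des (d1 # x) = t ^ des x" using x d12 by (simp add: des_Cons_hd)
  qed simp
  also have "\<dots> = FL t 1 (j - 1 - j') j' (k - 1 - k') k'"
    using main[OF g2 pne _, of 1 t] ascpi ascd2 desd assms(8) by simp
  also have "\<dots> = (\<Sum>i=1..j+k+1. if k' \<le> i + j' then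
              of_nat ((k - k' + j') choose (i + j' - k')) * of_nat ((j - j' + k' - 1) choose (i - 1)) * t ^ (i + j')
            else 0)"
  proof -
    have e1: "k - 1 - k' + 1 + j' = k - k' + j'" using kk2 assms(7) by simp
    show ?thesis using conv[OF jj kk, of t 1 "k - 1 - k'"] unfolding e1 .
  qed
  finally have P3: "(\<Sum>\<alpha>\<in>Sh_ll \<pi> \<delta>. t ^ des \<alpha>) = (\<Sum>i=1..j+k+1. if k' \<le> i + j' then
              of_nat ((k - k' + j') choose (i + j' - k')) * of_nat ((j - j' + k' - 1) choose (i - 1)) * t ^ (i + j')
            else 0)" .
  show ?thesis using P1 P2 P3 by blast
qed


end
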